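(* Let $\mathbb{D}=\{z\in\mathbb{C}:|z|<1\}$ and let $f$ be analytic in $\mathbb{D}$ and not linear. Then there is $0<r_0<1$ such that for all $0<r<r_0$, \[ \phi_{\operatorname{Area}}(r)=\frac{\operatorname{Area} f(r\mathbb{D})}{\pi r^2}>|f'(0)|^2. \]
   Context: $r\mathbb{D}=\{z:|z|<r\}$, $f(r\mathbb{D})$ is the image set, $\operatorname{Area}$ is two-dimensional Lebesgue measure. A function is linear if it is of the form $az+b$ with $a,b\in\mathbb{C}$ (constants allowed). *)

theory Defs
  imports "HOL-Complex_Analysis.Complex_Analysis"
begin

definition phi_Area :: "(complex \<Rightarrow> complex) \<Rightarrow> real \<Rightarrow> real" where
  "phi_Area f r = measure lebesgue (f ` ball 0 r) / (pi * r^2)"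

end

theory Submission
  imports Defs
begin

definition toC :: "real^2 \<Rightarrow> complex" where "toC x = Complex (x$1) (x$2)"
definition ofC :: "complex \<Rightarrow> real^2" where "ofC z = vector [Re z, Im z]"

lemma ofC_nth [simp]: "ofC z $ 1 = Re z" "ofC z $ 2 = Im z"
  by (simp_all add: ofC_def)
lemma toC_ofC [simp]: "toC (ofC z) = z" by (simp add: toC_def complex_eq_iff)
lemma ofC_toC [simp]: "ofC (toC x) = x"
  by (simp add: vec_eq_iff forall_2 toC_def)
lemma norm_toC [simp]: "norm (toC x) = norm x"
  by (simp add: toC_def norm_vec_def L2_set_def UNIV_2 cmod_def)
lemma norm_ofC [simp]: "norm (ofC z) = norm z"
  by (metis norm_toC toC_ofC)
lemma linear_toC: "linear toC"
  by (rule linearI) (simp_all add: toC_def complex_eq_iff)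
lemma linear_ofC: "linear ofC"
  by (rule linearI) (simp_all add: vec_eq_iff forall_2)

lemma Basis_2: "(Basis :: (real^2) set) = {axis 1 1, axis 2 1}"
  by (auto simp: Basis_vec_def UNIV_2)
lemma axis_12_neq: "axis (1::2) (1::real) \<noteq> axis 2 1"
  by (simp add: axis_eq_axis)
lemma toC_vimage_box: "toC -` box l u = box (ofC l) (ofC u)"
  by (auto simp: mem_box_cart forall_2 mem_box Basis_complex_def toC_def)
lemma borel_toC [measurable]: "toC \<in> borel_measurable borel"
  by (intro borel_measurable_continuous_onI linear_continuous_on linear_toC[unfolded linear_conv_bounded_linear])
lemma distr_toC: "distr lborel borel toC = lborel"
proof (rule lborel_eqI[symmetric])
  fix l u :: complex assume le: "\<And>b. b \<in> Basis \<Longrightarrow> l \<bullet> b \<le> u \<bullet> b"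
  then have "Re l \<le> Re u" "Im l \<le> Im u" using le[of 1] le[of \<i>] by (auto simp: Basis_complex_def)
  then show "emeasure (distr lborel borel toC) (box l u) = (\<Prod>b\<in>Basis. (u - l) \<bullet> b)"
    by (simp add: emeasure_distr toC_vimage_box emeasure_lborel_box_eq Basis_2 axis_12_neq
         cart_eq_inner_axis[symmetric] Basis_complex_def)
qed simp

lemma ofC_image_vimage: "ofC ` A = toC -` A"
  by (auto simp: image_iff) (metis ofC_toC)
lemma measure_ofC_image:
  assumes "A \<in> sets borel"
  shows "measure lebesgue (ofC ` A) = measure lebesgue A"
proof -
  have m: "toC -` A \<in> sets borel" using measurable_sets[OF borel_toC assms] by simp
  have "measure lebesgue (ofC ` A) = measure lborel (toC -` A)"
    using m by (simp add: ofC_image_vimage measure_completion)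
  also have "\<dots> = measure (distr lborel borel toC) A"
    using assms by (simp add: measure_distr)
  also have "\<dots> = measure lebesgue A"
    using assms by (simp add: distr_toC measure_completion)
  finally show ?thesis .
qed
lemma toC_ball: "toC ` ball 0 r = ball 0 r"
  by (auto simp: image_iff intro!: bexI[of _ "ofC x" for x])
lemma ofC_ball: "ofC ` ball 0 r = ball 0 r"
  by (auto simp: image_iff intro!: bexI[of _ "toC x" for x])

lemma toC_axis [simp]: "toC (axis 1 1) = 1" "toC (axis 2 1) = \<i>"
  by (simp_all add: toC_def axis_def complex_eq_iff)

lemma det_mult_matrix: "det (matrix (\<lambda>v. ofC (c * toC v))) = (cmod c)^2"
  unfolding cmod_power2 by (simp add: det_2 matrix_def power2_eq_square)

lemma continuous_on_toC: "continuous_on S toC"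
  by (intro linear_continuous_on linear_toC[unfolded linear_conv_bounded_linear])
lemma continuous_on_ofC: "continuous_on S ofC"
  by (intro linear_continuous_on linear_ofC[unfolded linear_conv_bounded_linear])

lemma continuous_on_comp_toC:
  assumes "continuous_on (ball 0 R) h"
  shows "continuous_on (ball 0 R) (\<lambda>x. h (toC x))"
  by (rule continuous_on_compose2[OF assms continuous_on_toC]) (auto simp: toC_ball[symmetric])

lemma sq_le_bound: "-a \<le> t \<Longrightarrow> t \<le> a \<Longrightarrow> (t::real)^2 \<le> a^2"
proof -
  assume "-a \<le> t" "t \<le> a"
  then have "(a - t) * (a + t) \<ge> 0" by (intro mult_nonneg_nonneg) auto
  then show ?thesis by (simp add: power2_eq_square algebra_simps)
qed

lemma cont_abs_integrable:
  fixes G :: "real^2 \<Rightarrow> 'b::euclidean_space"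
  assumes "continuous_on (ball 0 1) G" "S \<in> sets lebesgue" "S \<subseteq> ball 0 (1/2)"
  shows "G absolutely_integrable_on S"
proof -
  define a :: "real^2" where "a = vector [-1/2, -1/2]"
  define b :: "real^2" where "b = vector [1/2, 1/2]"
  have sub1: "cbox a b \<subseteq> ball 0 1"
  proof
    fix x assume "x \<in> cbox a b"
    then have h: "-1/2 \<le> x$1" "x$1 \<le> 1/2" "-1/2 \<le> x$2" "x$2 \<le> 1/2"
    proof -
      from \<open>x \<in> cbox a b\<close> have "\<forall>i. a$i \<le> x$i \<and> x$i \<le> b$i" by (simp add: mem_box_cart)
      from this[rule_format, of 1] this[rule_format, of 2] show "-1/2 \<le> x$1" "x$1 \<le> 1/2" "-1/2 \<le> x$2" "x$2 \<le> 1/2"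
        by (simp_all add: a_def b_def)
    qed
    have "(x$1)^2 \<le> (1/2)^2" "(x$2)^2 \<le> (1/2)^2"
      using h sq_le_bound by auto
    then have "(x$1)^2 \<le> 1/4" "(x$2)^2 \<le> 1/4" by (simp_all add: power2_eq_square)
    then have "norm x < 1"
      by (simp add: norm_vec_def L2_set_def UNIV_2 real_sqrt_less_iff)
    then show "x \<in> ball 0 1" by simp
  qed
  have sub2: "S \<subseteq> cbox a b"
  proof
    fix x assume "x \<in> S"
    then have "norm x < 1/2" using assms(3) by auto
    then have "\<bar>x$i\<bar> < 1/2" for i using component_le_norm_cart[of x i] by linarith
    then show "x \<in> cbox a b" by (force simp: mem_box_cart a_def b_def forall_2 abs_less_iff)
  qed
  have "G absolutely_integrable_on cbox a b"
    using absolutely_integrable_continuous continuous_on_subset[OF assms(1) sub1] by blast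
  then show ?thesis
    using set_integrable_subset[OF _ assms(2) sub2] by blast
qed

lemma cont_integrable:
  fixes G :: "real^2 \<Rightarrow> 'b::euclidean_space"
  assumes "continuous_on (ball 0 1) G" "S \<in> sets lebesgue" "S \<subseteq> ball 0 (1/2)"
  shows "G integrable_on S"
  using cont_abs_integrable[OF assms] absolutely_integrable_on_def by blast

lemma bl_toC: "bounded_linear toC" using linear_toC linear_conv_bounded_linear by blast
lemma bl_ofC: "bounded_linear ofC" using linear_ofC linear_conv_bounded_linear by blast

lemma area_formula:
  assumes hol: "f holomorphic_on ball 0 1" and r: "0 < r" "r \<le> 1/2" and inj: "inj_on f (ball 0 r)"
  shows "measure lebesgue (f ` ball 0 r) = integral (ball (0::real^2) r) (\<lambda>x. (cmod (deriv f (toC x)))^2)"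
proof -
  have sub: "ball (0::complex) r \<subseteq> ball 0 1" using r by auto
  have opn: "open (f ` ball 0 r)"
    by (rule open_mapping_thm3[OF holomorphic_on_subset[OF hol sub] open_ball inj])
  have "measure lebesgue (f ` ball 0 r) = measure lebesgue (ofC ` f ` ball 0 r)"
    using measure_ofC_image[of "f ` ball 0 r"] opn by simp
  also have "ofC ` f ` ball 0 r = (\<lambda>x. ofC (f (toC x))) ` ball 0 r"
    by (simp add: image_image toC_ball[symmetric])
  also have "measure lebesgue ((\<lambda>x. ofC (f (toC x))) ` ball 0 r) =
      integral (ball 0 r) (\<lambda>x. \<bar>det (matrix (\<lambda>v. ofC (deriv f (toC x) * toC v)))\<bar>)"
  proof (rule measure_differentiable_image_eq)
    show "ball 0 r \<in> sets lebesgue" by simp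
    show "((\<lambda>x. ofC (f (toC x))) has_derivative (\<lambda>v. ofC (deriv f (toC x) * toC v))) (at x within ball 0 r)"
      if x: "x \<in> ball 0 r" for x
    proof -
      have "toC x \<in> ball 0 1" using x r by auto
      then have d2: "(f has_derivative (*) (deriv f (toC x))) (at (toC x))"
        using holomorphic_derivI[OF hol open_ball] has_field_derivative_def by blast
      have d1: "(toC has_derivative toC) (at x within ball 0 r)"
        by (rule bounded_linear_imp_has_derivative[OF bl_toC])
      have d3: "(ofC has_derivative ofC) (at (f (toC x)))"
        by (rule bounded_linear_imp_has_derivative[OF bl_ofC])
      show ?thesis
        using has_derivative_compose[OF has_derivative_compose[OF d1 d2] d3] .
    qed
    show "inj_on (\<lambda>x. ofC (f (toC x))) (ball 0 r)"
      using inj unfolding inj_on_def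
      by (metis ofC_toC toC_ofC toC_ball image_eqI)
    have "continuous_on (ball 0 1) (\<lambda>x. (cmod (deriv f (toC x)))^2)"
      by (intro continuous_intros continuous_on_comp_toC holomorphic_on_imp_continuous_on
          holomorphic_deriv hol open_ball)
    then show "(\<lambda>x. \<bar>det (matrix (\<lambda>v. ofC (deriv f (toC x) * toC v)))\<bar>) integrable_on ball 0 r"
      using cont_integrable[of _ "ball 0 r"] r by (simp add: det_mult_matrix subset_ball)
  qed
  finally show ?thesis by (simp add: det_mult_matrix)
qed

lemma bl_vec: "bounded_linear (vec :: real \<Rightarrow> real^1)"
  by (rule bounded_linear_intro[of _ 1]) (auto simp: vec_eq_iff norm_vec_def L2_set_def)

lemma continuous_on_rot_toC:
  assumes "continuous_on (ball 0 1) k" "cmod w = 1"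
  shows "continuous_on (ball 0 1) (\<lambda>x. k (w * toC x))"
proof (rule continuous_on_compose2[OF assms(1)])
  show "continuous_on (ball 0 1) (\<lambda>x. w * toC x)"
    by (intro continuous_intros continuous_on_toC)
  show "(\<lambda>x. w * toC x) ` ball 0 1 \<subseteq> ball 0 1"
    using assms(2) by (auto simp: norm_mult)
qed

lemma rot_invariant:
  fixes k :: "complex \<Rightarrow> real"
  assumes k: "continuous_on (ball 0 1) k" and w: "cmod w = 1" and r: "0 < r" "r \<le> 1/2"
  shows "integral (ball (0::real^2) r) (\<lambda>x. k (w * toC x)) = integral (ball 0 r) (\<lambda>x. k (toC x))"
proof -
  define R where "R = (\<lambda>x::real^2. ofC (w * toC x))"
  have linR: "linear R"
    by (rule linearI) (simp_all add: R_def linear_add[OF linear_toC] linear_add[OF linear_ofC]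
        linear_cmul[OF linear_toC] linear_cmul[OF linear_ofC] distrib_left)
  have wnz: "w \<noteq> 0" using w by auto
  have RS: "R ` ball 0 r = ball 0 r"
  proof
    show "R ` ball 0 r \<subseteq> ball 0 r" using w by (auto simp: R_def norm_mult)
    show "ball 0 r \<subseteq> R ` ball 0 r"
    proof
      fix y :: "real^2" assume y: "y \<in> ball 0 r"
      have "y = R (ofC (toC y / w))" using wnz by (simp add: R_def)
      moreover have "ofC (toC y / w) \<in> ball 0 r" using y w by (simp add: norm_divide)
      ultimately show "y \<in> R ` ball 0 r" by blast
    qed
  qed
  have det: "\<bar>det (matrix R)\<bar> = 1" using det_mult_matrix[of w] w by (simp add: R_def)
  have sub: "ball (0::real^2) r \<subseteq> ball 0 (1/2)" using r by auto
  define F where "F = (\<lambda>x. vec (k (toC x)) :: real^1)"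
  have cF: "continuous_on (ball 0 1) F"
    unfolding F_def by (rule bounded_linear.continuous_on[OF bl_vec continuous_on_comp_toC[OF k]])
  have int: "F absolutely_integrable_on R ` ball 0 r"
    unfolding RS by (rule cont_abs_integrable[OF cF _ sub]) simp
  have "integral (R ` ball 0 r) F = \<bar>det (matrix R)\<bar> *\<^sub>R integral (ball 0 r) (F \<circ> R)"
    using integral_change_of_variables_linear[OF linR] int by blast
  then have eq: "integral (ball 0 r) F = integral (ball 0 r) (F \<circ> R)"
    by (simp add: RS det)
  have i1: "(\<lambda>x. k (toC x)) integrable_on ball 0 r"
    by (rule cont_integrable[OF continuous_on_comp_toC[OF k] _ sub]) simp
  have i2: "(\<lambda>x. k (w * toC x)) integrable_on ball 0 r"
    by (rule cont_integrable[OF continuous_on_rot_toC[OF k w] _ sub]) simp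
  have "F = vec \<circ> (\<lambda>x. k (toC x))" by (simp add: F_def o_def)
  moreover have "F \<circ> R = vec \<circ> (\<lambda>x. k (w * toC x))" by (simp add: F_def R_def o_def)
  ultimately have "vec (integral (ball 0 r) (\<lambda>x. k (toC x))) = (vec (integral (ball 0 r) (\<lambda>x. k (w * toC x))) :: real^1)"
    using eq integral_linear[OF i1 bl_vec] integral_linear[OF i2 bl_vec] by simp
  then show ?thesis by (simp add: vec_eq_iff)
qed

lemma root_unity_sum:
  assumes N: "N \<ge> 1"
  defines "\<omega> \<equiv> exp (2 * complex_of_real pi * \<i> / of_nat N)"
  shows "(\<Sum>j<N. (\<omega> ^ n) ^ j) = (if N dvd n then of_nat N else 0)"
proof -
  have wn: "\<omega> ^ n = exp (2 * complex_of_real pi * \<i> * of_nat n / of_nat N)" for n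
  proof -
    have "\<omega> ^ n = exp (of_nat n * (2 * complex_of_real pi * \<i> / of_nat N))"
      by (simp only: \<omega>_def exp_of_nat_mult)
    also have "of_nat n * (2 * complex_of_real pi * \<i> / of_nat N) = 2 * complex_of_real pi * \<i> * of_nat n / of_nat N"
      by simp
    finally show ?thesis .
  qed
  have eq1: "\<omega> ^ m = 1 \<longleftrightarrow> N dvd m" for m
    unfolding wn using complex_root_unity_eq_1[OF N] by simp
  have wN: "(\<omega> ^ n) ^ N = 1"
    using eq1[of "n * N"] by (simp add: power_mult)
  show ?thesis
  proof (cases "N dvd n")
    case True then have "\<omega> ^ n = 1" using eq1 by simp
    then show ?thesis using True by simp
  next
    case False
    then have "\<omega> ^ n \<noteq> 1" using eq1 by simp
    then show ?thesis using False by (simp add: sum_gp_strict wN)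
  qed
qed

lemma avg_bound:
  fixes g :: "complex \<Rightarrow> complex"
  assumes hol: "g holomorphic_on ball 0 1" and M: "\<And>z. cmod z \<le> 3/4 \<Longrightarrow> cmod (g z) \<le> M"
    and r: "0 < r" "r \<le> 1/2" and N: "N \<ge> 1" and z: "cmod z < r"
  shows "cmod ((\<Sum>j<N. g (exp (2 * complex_of_real pi * \<i> / of_nat N) ^ j * z)) - of_nat N * g 0)
           \<le> real N * M * (4*r/3)^N / (1 - 4*r/3)"
proof -
  define \<omega> where "\<omega> = exp (2 * complex_of_real pi * \<i> / of_nat N)"
  define q where "q = 4*r/3"
  define c where "c n = (deriv^^n) g 0 / fact n" for n
  have q: "0 \<le> q" "q < 1" using r by (auto simp: q_def)
  have nw: "cmod \<omega> = 1" by (simp add: \<omega>_def norm_exp_eq_Re)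
  have wz: "\<omega>^j * z \<in> ball 0 1" for j using z r nw by (simp add: norm_mult norm_power)
  have s1: "(\<lambda>n. c n * (\<omega>^j*z)^n) sums g (\<omega>^j*z)" for j
    using holomorphic_power_series[OF hol wz] by (simp add: c_def)
  have s2: "(\<lambda>n. \<Sum>j<N. c n * (\<omega>^j*z)^n) sums (\<Sum>j<N. g (\<omega>^j*z))"
    by (rule sums_sum) (rule s1)
  have termeq: "(\<Sum>j<N. c n * (\<omega>^j*z)^n) = c n * z^n * (if N dvd n then of_nat N else 0)" for n
  proof -
    have pw: "(\<omega>^j)^n = (\<omega>^n)^j" for j by (simp add: power_mult[symmetric] mult.commute)
    have "(\<Sum>j<N. c n * (\<omega>^j*z)^n) = c n * z^n * (\<Sum>j<N. (\<omega>^n)^j)"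
      by (simp add: sum_distrib_left power_mult_distrib pw mult_ac)
    then show ?thesis using root_unity_sum[OF N, of n] by (simp add: \<omega>_def)
  qed
  have s3: "(\<lambda>n. if n = 0 then of_nat N * g 0 else 0) sums (of_nat N * g 0)"
    using sums_single[of 0 "\<lambda>_. of_nat N * g 0"] by simp
  define t where "t n = c n * z^n * (if N dvd n then of_nat N else 0) - (if n = 0 then of_nat N * g 0 else 0)" for n
  have st: "t sums ((\<Sum>j<N. g (\<omega>^j*z)) - of_nat N * g 0)"
    using sums_diff[OF s2 s3] termeq by (simp add: t_def[abs_def])
  define b where "b n = (if N \<le> n then real N * M * q^n else 0)" for n
  have "cmod (g 0) \<le> M" using M[of 0] by simp
  then have M0: "0 \<le> M" by (rule order_trans[OF norm_ge_zero])
  have cb: "cmod (c n) \<le> M / (3/4)^n" for n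
  proof -
    have sub: "cball (0::complex) (3/4) \<subseteq> ball 0 1" by auto
    have "cmod ((deriv^^n) g 0) \<le> fact n * M / (3/4)^n"
    proof (rule Cauchy_inequality)
      show "g holomorphic_on ball 0 (3/4)" using hol by (rule holomorphic_on_subset) auto
      show "continuous_on (cball 0 (3/4)) g"
        using holomorphic_on_imp_continuous_on[OF hol] sub by (rule continuous_on_subset)
      show "cmod (g x) \<le> M" if "cmod (0 - x) = 3/4" for x using that M by simp
    qed simp
    then show ?thesis by (simp add: c_def norm_divide field_simps)
  qed
  have tb: "cmod (t n) \<le> b n" for n
  proof (cases "n = 0")
    case True
    then show ?thesis using N by (simp add: t_def c_def b_def)
  next
    case False
    show ?thesis
    proof (cases "N dvd n")
      case True
      then have Nn: "N \<le> n" using False by (simp add: dvd_imp_le)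
      have "cmod (t n) = cmod (c n) * cmod z ^ n * real N"
        using True False by (simp add: t_def norm_mult norm_power)
      also have "\<dots> \<le> M / (3/4)^n * r ^ n * real N"
        by (intro mult_right_mono mult_mono cb power_mono) (use z M0 in auto)
      also have "M / (3/4)^n * r ^ n * real N = real N * M * q^n"
        by (simp add: q_def power_divide field_simps)
      finally show ?thesis using Nn by (simp add: b_def)
    next
      case nd: False
      then show ?thesis using False M0 q by (simp add: t_def b_def)
    qed
  qed
  have bs: "b sums (real N * M * q^N / (1 - q))"
  proof -
    have "(\<lambda>i. real N * M * q^N * q^i) sums (real N * M * q^N * (1 / (1 - q)))"
      by (intro sums_mult geometric_sums) (use q in simp)
    moreover have "(\<lambda>i. b (i + N)) = (\<lambda>i. real N * M * q^N * q^i)"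
      by (simp add: b_def power_add mult_ac)
    moreover have "sum b {..<N} = 0" by (simp add: b_def)
    ultimately show ?thesis using sums_iff_shift[of b N] by simp
  qed
  have "cmod (suminf t) \<le> suminf b"
    by (rule norm_suminf_le[OF tb]) (use bs in \<open>simp add: sums_summable\<close>)
  then show ?thesis
    using sums_unique[OF st] sums_unique[OF bs] by (simp add: \<omega>_def q_def)
qed

lemma integral_const_lm:
  assumes "S \<in> lmeasurable"
  shows "integral S (\<lambda>x::real^2. c) = c * measure lebesgue S"
proof -
  have i1: "(\<lambda>x::real^2. 1::real) integrable_on S" by (rule integrable_on_const[OF assms])
  have "integral S (\<lambda>x::real^2. c) = integral S (\<lambda>x::real^2. c * 1)" by simp
  also have "\<dots> = c * integral S (\<lambda>x::real^2. 1::real)"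
    by (rule integral_mult[OF i1, symmetric])
  also have "integral S (\<lambda>x::real^2. 1::real) = measure lebesgue S"
    by (rule lmeasure_integral[OF assms, symmetric])
  finally show ?thesis .
qed

lemma mean_zero:
  fixes g :: "complex \<Rightarrow> complex"
  assumes hol: "g holomorphic_on ball 0 1" and r: "0 < r" "r \<le> 1/2"
  shows "integral (ball (0::real^2) r) (\<lambda>x. Re (cnj (g 0) * (g (toC x) - g 0))) = 0"
proof -
  define k where "k w = Re (cnj (g 0) * (g w - g 0))" for w
  have cg: "continuous_on (ball 0 1) g" using hol by (rule holomorphic_on_imp_continuous_on)
  have ck: "continuous_on (ball 0 1) k" unfolding k_def by (intro continuous_intros cg)
  have sub: "ball (0::real^2) r \<subseteq> ball 0 (1/2)" using r by auto
  obtain M where M: "\<And>z. cmod z \<le> 3/4 \<Longrightarrow> cmod (g z) \<le> M"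
  proof -
    have "compact (g ` cball 0 (3/4))"
      by (rule compact_continuous_image[OF continuous_on_subset[OF cg]]) auto
    then obtain B where "\<forall>y\<in>g ` cball 0 (3/4). norm y \<le> B"
      using compact_imp_bounded bounded_iff by metis
    then show ?thesis by (intro that[of B]) auto
  qed
  define q where "q = 4*r/3"
  have q: "0 \<le> q" "q < 1" using r by (auto simp: q_def)
  define m where "m = measure lebesgue (ball (0::real^2) r)"
  have m0: "0 \<le> m" by (simp add: m_def)
  define I where "I = integral (ball (0::real^2) r) (\<lambda>x. k (toC x))"
  define K where "K = cmod (g 0) * M / (1 - q) * m"
  have bound: "\<bar>I\<bar> \<le> K * q ^ N" if N: "N \<ge> 1" for N
  proof -
    define \<omega> where "\<omega> = exp (2 * complex_of_real pi * \<i> / of_nat N)"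
    have nw: "cmod (\<omega>^j) = 1" for j by (simp add: \<omega>_def norm_exp_eq_Re norm_power)
    have rot: "integral (ball 0 r) (\<lambda>x. k (\<omega>^j * toC x)) = I" for j
      unfolding I_def by (rule rot_invariant[OF ck nw r])
    have intj: "(\<lambda>x. k (\<omega>^j * toC x)) integrable_on ball 0 r" for j
      by (rule cont_integrable[OF continuous_on_rot_toC[OF ck nw] _ sub]) simp
    have "integral (ball 0 r) (\<lambda>x. \<Sum>j<N. k (\<omega>^j * toC x)) = (\<Sum>j<N. integral (ball 0 r) (\<lambda>x. k (\<omega>^j * toC x)))"
      by (rule integral_sum) (auto intro: intj)
    also have "\<dots> = real N * I" by (simp add: rot)
    finally have eqI: "integral (ball 0 r) (\<lambda>x. \<Sum>j<N. k (\<omega>^j * toC x)) = real N * I" .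
    have pt: "\<bar>\<Sum>j<N. k (\<omega>^j * z)\<bar> \<le> cmod (g 0) * (real N * M * q^N / (1 - q))" if z: "cmod z < r" for z
    proof -
      have "(\<Sum>j<N. k (\<omega>^j * z)) = (\<Sum>j<N. Re (cnj (g 0) * (g (\<omega>^j * z) - g 0)))"
        by (simp only: k_def)
      also have "\<dots> = Re (\<Sum>j<N. cnj (g 0) * (g (\<omega>^j * z) - g 0))"
        by (rule Re_sum[symmetric])
      also have "(\<Sum>j<N. cnj (g 0) * (g (\<omega>^j * z) - g 0)) = cnj (g 0) * ((\<Sum>j<N. g (\<omega>^j * z)) - of_nat N * g 0)"
        by (simp add: sum_distrib_left[symmetric] sum_subtractf)
      finally have eqs: "(\<Sum>j<N. k (\<omega>^j * z)) = Re (cnj (g 0) * ((\<Sum>j<N. g (\<omega>^j * z)) - of_nat N * g 0))" .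
      have "\<bar>Re (cnj (g 0) * ((\<Sum>j<N. g (\<omega>^j * z)) - of_nat N * g 0))\<bar> \<le> cmod (cnj (g 0) * ((\<Sum>j<N. g (\<omega>^j * z)) - of_nat N * g 0))"
        by (rule abs_Re_le_cmod)
      also have "\<dots> \<le> cmod (g 0) * (real N * M * q^N / (1 - q))"
        unfolding norm_mult complex_mod_cnj
        by (rule mult_left_mono[OF avg_bound[OF hol M r N z, folded \<omega>_def q_def]]) auto
      finally show ?thesis using eqs by simp
    qed
    have i1: "(\<lambda>x. \<Sum>j<N. k (\<omega>^j * toC x)) integrable_on ball 0 r"
      by (rule integrable_sum) (auto intro: intj)
    have i2: "(\<lambda>x. cmod (g 0) * (real N * M * q^N / (1 - q))) integrable_on ball (0::real^2) r"
      by (rule integrable_on_const) simp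
    have i3: "norm (\<Sum>j<N. k (\<omega>^j * toC x)) \<le> cmod (g 0) * (real N * M * q^N / (1 - q))"
      if "x \<in> ball 0 r" for x using pt[of "toC x"] that by simp
    have "norm (integral (ball 0 r) (\<lambda>x. \<Sum>j<N. k (\<omega>^j * toC x))) \<le> integral (ball 0 r) (\<lambda>x::real^2. cmod (g 0) * (real N * M * q^N / (1 - q)))"
      by (rule Henstock_Kurzweil_Integration.integral_norm_bound_integral[OF i1 i2]) (rule i3)
    then have "\<bar>real N * I\<bar> \<le> integral (ball 0 r) (\<lambda>x::real^2. cmod (g 0) * (real N * M * q^N / (1 - q)))"
      by (simp add: eqI)
    also have "\<dots> = cmod (g 0) * (real N * M * q^N / (1 - q)) * m"
      by (simp add: integral_const_lm m_def)
    finally have "real N * \<bar>I\<bar> \<le> real N * (K * q^N)"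
      by (simp add: K_def abs_mult mult_ac)
    then show ?thesis using N by simp
  qed
  have lim: "(\<lambda>n. K * q ^ Suc n) \<longlonglongrightarrow> 0"
    using LIMSEQ_Suc[OF tendsto_mult_right_zero[OF LIMSEQ_power_zero[of q]]] q by simp
  have "\<bar>I\<bar> \<le> 0"
  proof (rule LIMSEQ_le_const[OF lim])
    show "\<exists>N. \<forall>n\<ge>N. \<bar>I\<bar> \<le> K * q ^ Suc n"
    proof (intro exI allI impI)
      fix n :: nat show "\<bar>I\<bar> \<le> K * q ^ Suc n" by (rule bound) simp
    qed
  qed
  then show ?thesis by (simp add: I_def k_def)
qed

lemma measure_ball2: "r \<ge> 0 \<Longrightarrow> measure lebesgue (ball (x::real^2) r) = r^2 * pi"
  using circle_area[of r x] by (simp add: measure_completion)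

lemma sq_decomp: "(cmod (a + b))^2 = (cmod a)^2 + 2 * Re (cnj a * b) + (cmod b)^2"
  unfolding cmod_power2 by (simp add: power2_eq_square algebra_simps)

lemma integral_strict:
  fixes g :: "complex \<Rightarrow> complex"
  assumes hol: "g holomorphic_on ball 0 1" and r: "0 < r" "r \<le> 1/2"
    and z0: "z0 \<in> ball 0 r" "g z0 \<noteq> g 0"
  shows "integral (ball (0::real^2) r) (\<lambda>x. (cmod (g (toC x)))^2) > pi * r^2 * (cmod (g 0))^2"
proof -
  have cg: "continuous_on (ball 0 1) g" using hol by (rule holomorphic_on_imp_continuous_on)
  have sub: "ball (0::real^2) r \<subseteq> ball 0 (1/2)" using r by auto
  define k where "k x = Re (cnj (g 0) * (g (toC x) - g 0))" for x
  define H where "H x = (cmod (g (toC x) - g 0))^2" for x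
  define c where "c = (cmod (g 0))^2"
  have cH: "continuous_on (ball 0 1) H"
    unfolding H_def by (intro continuous_intros continuous_on_comp_toC cg)
  have ck: "continuous_on (ball 0 1) k"
    unfolding k_def by (intro continuous_intros continuous_on_comp_toC cg)
  have iH: "H integrable_on S" if "S \<in> sets lebesgue" "S \<subseteq> ball 0 (1/2)" for S
    by (rule cont_integrable[OF cH that])
  have ik: "k integrable_on ball 0 r" by (rule cont_integrable[OF ck _ sub]) simp
  have ic: "(\<lambda>x::real^2. c) integrable_on ball 0 r" by (rule integrable_on_const) simp
  have dec: "(cmod (g (toC x)))^2 = c + 2 * k x + H x" for x
  proof -
    have "g (toC x) = g 0 + (g (toC x) - g 0)" by simp
    then show ?thesis unfolding c_def k_def H_def
      by (metis sq_decomp)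
  qed
  have kz: "integral (ball 0 r) k = 0"
    unfolding k_def by (rule mean_zero[OF hol r])
  have Hpos: "integral (ball 0 r) H > 0"
  proof -
    define x0 where "x0 = ofC z0"
    have x0: "x0 \<in> ball 0 r" using z0 by (simp add: x0_def)
    have Hx0: "H x0 > 0" using z0 by (simp add: H_def x0_def)
    have "isCont H x0"
      using continuous_on_eq_continuous_at[of "ball 0 1" H] cH x0 r by auto
    then obtain d where d: "d > 0" "\<And>x. dist x x0 < d \<Longrightarrow> dist (H x) (H x0) < H x0 / 2"
      using Hx0 unfolding continuous_at_eps_delta by (metis half_gt_zero)
    define \<delta> where "\<delta> = min d (r - norm x0)"
    have \<delta>: "\<delta> > 0" using d x0 by (simp add: \<delta>_def)
    have bsub: "ball x0 \<delta> \<subseteq> ball 0 r"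
    proof
      fix x assume "x \<in> ball x0 \<delta>"
      then have "norm (x - x0) < r - norm x0" by (simp add: \<delta>_def dist_norm norm_minus_commute)
      moreover have "norm x \<le> norm x0 + norm (x - x0)" using norm_triangle_ineq[of x0 "x - x0"] by simp
      ultimately show "x \<in> ball 0 r" by simp
    qed
    have Hge: "H x \<ge> H x0 / 2" if "x \<in> ball x0 \<delta>" for x
    proof -
      have "dist x x0 < d" using that by (simp add: \<delta>_def dist_commute)
      then have "\<bar>H x - H x0\<bar> < H x0 / 2" using d(2)[of x] by (simp add: dist_real_def)
      then show ?thesis by linarith
    qed
    have "0 < H x0 / 2 * measure lebesgue (ball x0 \<delta>)"
      using Hx0 \<delta> by (simp add: measure_ball2)
    also have "\<dots> = integral (ball x0 \<delta>) (\<lambda>x. H x0 / 2)"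
      by (simp add: integral_const_lm)
    also have "\<dots> \<le> integral (ball x0 \<delta>) H"
      by (rule integral_le) (use bsub sub Hge in \<open>auto intro!: integrable_on_const iH\<close>)
    also have "\<dots> \<le> integral (ball 0 r) H"
      by (rule integral_subset_le[OF bsub]) (use bsub sub in \<open>auto intro!: iH simp: H_def\<close>)
    finally show ?thesis .
  qed
  have "integral (ball 0 r) (\<lambda>x. (cmod (g (toC x)))^2) = integral (ball 0 r) (\<lambda>x. c + 2 * k x + H x)"
    by (simp add: dec)
  also have "\<dots> = integral (ball 0 r) (\<lambda>x::real^2. c) + 2 * integral (ball 0 r) k + integral (ball 0 r) H"
  proof -
    have iH': "H integrable_on ball 0 r" using iH[of "ball 0 r"] sub by simp
    have ik2: "(\<lambda>x. 2 * k x) integrable_on ball 0 r" using integrable_on_cmult_left[OF ik, of 2] by simp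
    have "integral (ball 0 r) (\<lambda>x. (c + 2 * k x) + H x) = integral (ball 0 r) (\<lambda>x. c + 2 * k x) + integral (ball 0 r) H"
      by (rule integral_add[OF integrable_add[OF ic ik2] iH'])
    moreover have "integral (ball 0 r) (\<lambda>x. c + 2 * k x) = integral (ball 0 r) (\<lambda>x::real^2. c) + integral (ball 0 r) (\<lambda>x. 2 * k x)"
      by (rule integral_add[OF ic ik2])
    moreover have "integral (ball 0 r) (\<lambda>x. 2 * k x) = 2 * integral (ball 0 r) k"
      using integral_mult[OF ik, of 2] by simp
    ultimately show ?thesis by simp
  qed
  also have "\<dots> = c * (r^2 * pi) + integral (ball 0 r) H"
    using r by (simp add: kz integral_const_lm measure_ball2 circle_area)
  finally show ?thesis using Hpos by (simp add: c_def mult_ac)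
qed

lemma linear_extend:
  assumes hol: "f holomorphic_on ball 0 1" and r: "0 < r" "r \<le> 1"
    and lin: "\<forall>z\<in>ball 0 r. f z = a * z + b"
  shows "\<forall>z\<in>ball 0 1. f z = a * z + b"
proof
  fix z :: complex assume z: "z \<in> ball 0 1"
  show "f z = a * z + b"
  proof (rule analytic_continuation_open[of "ball 0 r" "ball 0 1" f "\<lambda>z. a * z + b"])
    show "ball (0::complex) r \<noteq> {}" using r by simp
    show "ball (0::complex) r \<subseteq> ball 0 1" using r by auto
    show "(\<lambda>z. a * z + b) holomorphic_on ball 0 1" by (intro holomorphic_intros)
  qed (use hol lin z in auto)
qed

lemma deriv_const_linear:
  assumes hol: "f holomorphic_on ball 0 1" and r: "0 < r" "r \<le> 1"
    and const: "\<forall>z\<in>ball 0 r. deriv f z = deriv f 0"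
  shows "\<forall>z\<in>ball 0 r. f z = deriv f 0 * z + f 0"
proof -
  define \<phi> where "\<phi> z = f z - deriv f 0 * z" for z
  have "(\<phi> has_field_derivative 0) (at z within ball 0 r)" if z: "z \<in> ball 0 r" for z
  proof -
    have "z \<in> ball 0 1" using z r by auto
    then have "(f has_field_derivative deriv f z) (at z within ball 0 r)"
      by (rule holomorphic_derivI[OF hol open_ball])
    then have "(f has_field_derivative deriv f 0) (at z within ball 0 r)" using const z by simp
    then show ?thesis
      unfolding \<phi>_def by (auto intro!: derivative_eq_intros)
  qed
  then obtain c where c: "\<forall>z\<in>ball 0 r. \<phi> z = c"
    using has_field_derivative_zero_constant[of "ball 0 r" \<phi>] by auto
  have "c = f 0" using c[rule_format, of 0] r by (simp add: \<phi>_def)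
  then show ?thesis using c by (auto simp: \<phi>_def algebra_simps)
qed

lemma measure_ball_complex: "r \<ge> 0 \<Longrightarrow> measure lebesgue (ball (x::complex) r) = pi * r^2"
  using content_ball[where c=x and r=r] by (simp add: measure_completion unit_ball_vol_2 mult.commute)

theorem lemma2p2:
  fixes f :: "complex \<Rightarrow> complex"
  assumes "f holomorphic_on ball 0 1"
    and "\<not> (\<exists>a b. \<forall>z\<in>ball 0 1. f z = a * z + b)"
  shows "\<exists>r0. 0 < r0 \<and> r0 < 1 \<and>
           (\<forall>r. 0 < r \<and> r < r0 \<longrightarrow> phi_Area f r > (norm (deriv f 0))^2)"
proof -
  note hol = assms(1)
  have nlin: "\<not> (\<forall>z\<in>ball 0 r. f z = a * z + b)" if "0 < r" "r \<le> 1" for r a b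
    using linear_extend[OF hol that] assms(2) by blast
  show ?thesis
  proof (cases "deriv f 0 = 0")
    case True
    have "phi_Area f r > 0" if r: "0 < r" "r < 1/2" for r
    proof -
      have sub: "ball (0::complex) r \<subseteq> ball 0 1" using r by auto
      have nc: "\<not> f constant_on ball 0 1"
        using nlin[of 1 0] by (auto simp: constant_on_def)
      have opn: "open (f ` ball 0 r)"
        by (rule open_mapping_thm[OF hol open_ball connected_ball open_ball sub nc])
      have "compact (f ` cball 0 r)"
        by (rule compact_continuous_image[OF continuous_on_subset[OF holomorphic_on_imp_continuous_on[OF hol]]])
           (use r in auto)
      then have "bounded (f ` ball 0 r)"
        by (rule bounded_subset[OF compact_imp_bounded]) auto
      then have lm: "f ` ball 0 r \<in> lmeasurable"
        using opn by (intro bounded_set_imp_lmeasurable) (auto intro: borel_open)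
      obtain e where e: "e > 0" "ball (f 0) e \<subseteq> f ` ball 0 r"
        using opn r open_contains_ball[of "f ` ball 0 r"] by force
      have "0 < pi * e^2" using e by simp
      also have "\<dots> = measure lebesgue (ball (f 0) e)" using e by (intro measure_ball_complex[symmetric]) simp
      also have "\<dots> \<le> measure lebesgue (f ` ball 0 r)"
        by (rule measure_mono_fmeasurable[OF e(2)]) (use lm in auto)
      finally show ?thesis using r by (simp add: phi_Area_def)
    qed
    then show ?thesis using True by (intro exI[of _ "1/2"]) auto
  next
    case False
    have c0: "(0::complex) \<in> ball 0 1" by simp
    obtain \<rho> where \<rho>: "0 < \<rho>" "ball (0::complex) \<rho> \<subseteq> ball 0 1" "inj_on f (ball 0 \<rho>)"
      by (rule has_complex_derivative_locally_injective[OF hol c0 open_ball False]) (rule that, assumption+)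
    define r0 where "r0 = min \<rho> (1/2)"
    have "phi_Area f r > (norm (deriv f 0))^2" if r: "0 < r" "r < r0" for r
    proof -
      have r2: "r \<le> 1/2" using r by (simp add: r0_def)
      have inj: "inj_on f (ball 0 r)"
        by (rule inj_on_subset[OF \<rho>(3)]) (use r in \<open>auto simp: r0_def\<close>)
      have hd: "deriv f holomorphic_on ball 0 1" by (rule holomorphic_deriv[OF hol open_ball])
      obtain z0 where z0: "z0 \<in> ball 0 r" "deriv f z0 \<noteq> deriv f 0"
      proof (rule ccontr)
        assume "\<not> thesis"
        then have dc: "\<forall>z\<in>ball 0 r. deriv f z = deriv f 0" using that by blast
        have r1: "r \<le> 1" using r2 by simp
        have "\<forall>z\<in>ball 0 r. f z = deriv f 0 * z + f 0"
          by (rule deriv_const_linear[OF hol r(1) r1 dc])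
        then show False using nlin[OF r(1) r1] by blast
      qed
      have "measure lebesgue (f ` ball 0 r) = integral (ball (0::real^2) r) (\<lambda>x. (cmod (deriv f (toC x)))^2)"
        by (rule area_formula[OF hol r(1) r2 inj])
      also have "\<dots> > pi * r^2 * (cmod (deriv f 0))^2"
        by (rule integral_strict[OF hd r(1) r2 z0])
      finally show ?thesis using r by (simp add: phi_Area_def field_simps)
    qed
    moreover have "0 < r0" "r0 < 1" using \<rho> by (auto simp: r0_def)
    ultimately show ?thesis by blast
  qed
qed


end
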